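(* Let $G\le\operatorname{Homeo}(\mathfrak{C})$ be simple and vigorous. Let $D\in K_{\mathfrak{C}}$ and let $\gamma\in G$ satisfy $D\gamma\cap D=\varnothing$ and $D\gamma\cup D\neq\mathfrak{C}$. Let $\delta\in\operatorname{Homeo}(\mathfrak{C})$ fix every point of $\mathfrak{C}\setminus D$. Let $H=\langle G\cup\{[\delta,\gamma]\}\rangle$. Then $H$ is simple and vigorous. If moreover $G$ is finitely generated, then so is $H$.
   Context: $\mathfrak{C}$ denotes a Cantor space (a space homeomorphic to $\{0,1\}^\omega$). Groups of homeomorphisms act on the right, products composed left to right, and $[a,b]=a^{-1}b^{-1}ab$. $K_{\mathfrak{C}}$ denotes the set of non-empty proper clopen subsets of $\mathfrak{C}$. For $\gamma\in\operatorname{Homeo}(\mathfrak{C})$, $\operatorname{supp}(\gamma)=\{p\in\mathfrak{C}: p\gamma\neq p\}$. A subset $S\subseteq \operatorname{Homeo}(\mathfrak{C})$ is vigorous if for all clopen $A,B,C\subseteq\mathfrak{C}$ with $B,C$ non-empty proper subsets of $A$ there is $\gamma\in S$ with $\operatorname{supp}(\gamma)\subseteq A$ and $B\gamma\subseteq C$. *)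

theory Defs
  imports "HOL-Analysis.Analysis" "HOL-Algebra.Coset" "HOL-Algebra.Generated_Groups"
begin

type_synonym point = "nat \<Rightarrow> bool"

definition cantor :: "point topology" where
  "cantor = product_topology (\<lambda>_::nat. discrete_topology (UNIV :: bool set)) UNIV"

definition clopen :: "point set \<Rightarrow> bool" where
  "clopen A \<longleftrightarrow> openin cantor A \<and> closedin cantor A"

definition K_C :: "point set set" where
  "K_C = {A. clopen A \<and> A \<noteq> {} \<and> A \<noteq> topspace cantor}"

definition Homeo :: "(point \<Rightarrow> point) set" where
  "Homeo = {f. homeomorphic_map cantor cantor f}"

text \<open>Right action, products composed left to right: f \<otimes> g = apply f first, then g.\<close>
definition homeo_group :: "(point \<Rightarrow> point) monoid" where
  "homeo_group = \<lparr>carrier = Homeo, mult = (\<lambda>f g. g \<circ> f), one = id\<rparr>"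

definition supp :: "(point \<Rightarrow> point) \<Rightarrow> point set" where
  "supp g = {p. g p \<noteq> p}"

definition commutator :: "(point \<Rightarrow> point) \<Rightarrow> (point \<Rightarrow> point) \<Rightarrow> (point \<Rightarrow> point)" where
  "commutator a b = inv\<^bsub>homeo_group\<^esub> a \<otimes>\<^bsub>homeo_group\<^esub> inv\<^bsub>homeo_group\<^esub> b
      \<otimes>\<^bsub>homeo_group\<^esub> a \<otimes>\<^bsub>homeo_group\<^esub> b"

definition vigorous :: "(point \<Rightarrow> point) set \<Rightarrow> bool" where
  "vigorous S \<longleftrightarrow> (\<forall>A B C. clopen A \<and> clopen B \<and> clopen C \<and>
      B \<noteq> {} \<and> C \<noteq> {} \<and> B \<subset> A \<and> C \<subset> A \<longrightarrow>
      (\<exists>g\<in>S. supp g \<subseteq> A \<and> g ` B \<subseteq> C))"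

definition simple_subgroup :: "(point \<Rightarrow> point) set \<Rightarrow> bool" where
  "simple_subgroup G \<longleftrightarrow> G \<noteq> {id} \<and>
     (\<forall>N. N \<lhd> (homeo_group\<lparr>carrier := G\<rparr>) \<longrightarrow> N = {id} \<or> N = G)"

definition fin_gen :: "(point \<Rightarrow> point) set \<Rightarrow> bool" where
  "fin_gen G \<longleftrightarrow> (\<exists>S. finite S \<and> S \<subseteq> G \<and> generate homeo_group S = G)"

end

theory Submission
  imports Defs
begin


definition cyl :: "nat \<Rightarrow> point \<Rightarrow> point set" where
  "cyl n p = {x. \<forall>i<n. x i = p i}"

lemma topspace_cantor[simp]: "topspace cantor = UNIV"
  by (simp add: cantor_def)

lemma cyl_self[simp]: "p \<in> cyl n p" by (simp add: cyl_def)

lemma cyl_mono: "m \<le> n \<Longrightarrow> cyl n p \<subseteq> cyl m p"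
  by (auto simp: cyl_def)

lemma open_cantor_iff: "openin cantor S \<longleftrightarrow> (\<forall>x\<in>S. \<exists>n. cyl n x \<subseteq> S)"
proof
  assume "openin cantor S"
  show "\<forall>x\<in>S. \<exists>n. cyl n x \<subseteq> S"
  proof
    fix x assume "x \<in> S"
    then obtain U where U: "finite {i. U i \<noteq> UNIV}" "x \<in> Pi\<^sub>E UNIV U" "Pi\<^sub>E UNIV U \<subseteq> S"
      using \<open>openin cantor S\<close> unfolding cantor_def openin_product_topology_alt by auto
    define n where "n = Suc (Max {i. U i \<noteq> UNIV})"
    have "cyl n x \<subseteq> S"
    proof
      fix y assume y: "y \<in> cyl n x"
      have "y \<in> Pi\<^sub>E UNIV U"
      proof (simp add: PiE_def Pi_def, intro allI)
        fix i show "y i \<in> U i"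
        proof (cases "U i = UNIV")
          case False
          then have "i \<le> Max {i. U i \<noteq> UNIV}" using U(1) by simp
          then have "i < n" by (simp add: n_def)
          then show ?thesis using y U(2) by (auto simp: cyl_def)
        qed simp
      qed
      then show "y \<in> S" using U(3) by blast
    qed
    then show "\<exists>n. cyl n x \<subseteq> S" by blast
  qed
next
  assume R: "\<forall>x\<in>S. \<exists>n. cyl n x \<subseteq> S"
  show "openin cantor S"
    unfolding cantor_def openin_product_topology_alt
  proof (intro ballI)
    fix x assume "x \<in> S"
    then obtain n where n: "cyl n x \<subseteq> S" using R by blast
    define U where "U = (\<lambda>i. if i < n then {x i} else (UNIV::bool set))"
    have fin: "finite {i. U i \<noteq> UNIV}"
      by (rule finite_subset[of _ "{..<n}"]) (auto simp: U_def)
    have eq: "Pi\<^sub>E UNIV U = cyl n x"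
      by (auto simp: PiE_def Pi_def U_def cyl_def split: if_splits)
    show "\<exists>U. finite {i \<in> UNIV. U i \<noteq> topspace (discrete_topology UNIV)} \<and>
             (\<forall>i\<in>UNIV. openin (discrete_topology UNIV) (U i)) \<and> x \<in> Pi\<^sub>E UNIV U \<and> Pi\<^sub>E UNIV U \<subseteq> S"
      using fin eq n by (intro exI[of _ U]) auto
  qed
qed

lemma closed_cantor_iff: "closedin cantor S \<longleftrightarrow> openin cantor (- S)"
  by (simp add: closedin_def Compl_eq_Diff_UNIV)

lemma clopen_iff: "clopen S \<longleftrightarrow> (\<forall>x\<in>S. \<exists>n. cyl n x \<subseteq> S) \<and> (\<forall>x\<in>-S. \<exists>n. cyl n x \<subseteq> -S)"
  by (simp add: clopen_def closed_cantor_iff open_cantor_iff)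

lemma clopen_Compl: "clopen S \<Longrightarrow> clopen (- S)"
  by (simp add: clopen_iff)

lemma clopen_Int: "clopen S \<Longrightarrow> clopen T \<Longrightarrow> clopen (S \<inter> T)"
  by (simp add: clopen_def closedin_Int openin_Int)

lemma clopen_Un: "clopen S \<Longrightarrow> clopen T \<Longrightarrow> clopen (S \<union> T)"
  by (simp add: clopen_def closedin_Un openin_Un)

lemma clopen_Diff: "clopen S \<Longrightarrow> clopen T \<Longrightarrow> clopen (S - T)"
  by (simp add: Diff_eq clopen_Compl clopen_Int)

lemma cyl_eq: "y \<in> cyl n x \<Longrightarrow> cyl n y = cyl n x"
  by (auto simp: cyl_def)

lemma clopen_cyl: "clopen (cyl n p)"
  unfolding clopen_iff
proof (intro conjI ballI)
  fix x assume "x \<in> cyl n p" then show "\<exists>m. cyl m x \<subseteq> cyl n p" using cyl_eq by blast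
next
  fix x assume x: "x \<in> - cyl n p"
  have "cyl n x \<subseteq> - cyl n p"
  proof
    fix y assume "y \<in> cyl n x"
    then show "y \<in> - cyl n p" using x by (auto simp: cyl_def)
  qed
  then show "\<exists>m. cyl m x \<subseteq> - cyl n p" by blast
qed

lemma clopen_UNIV: "clopen UNIV"
  using openin_topspace[of cantor] closedin_topspace[of cantor] by (simp add: clopen_def)

lemma Homeo_clopen_image: "h \<in> Homeo \<Longrightarrow> clopen S \<Longrightarrow> clopen (h ` S)"
  unfolding clopen_def Homeo_def
  using homeomorphic_map_openness homeomorphic_map_closedness by fastforce

lemma split_open:
  assumes "openin cantor U" "U \<noteq> {}"
  obtains B C where "clopen B" "clopen C" "B \<noteq> {}" "C \<noteq> {}" "B \<subseteq> U" "C \<subseteq> U" "B \<inter> C = {}"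
proof -
  obtain x where "x \<in> U" using assms by blast
  then obtain n where n: "cyl n x \<subseteq> U" using assms open_cantor_iff by blast
  define B where "B = cyl (Suc n) x"
  define y where "y = x(n := \<not> x n)"
  define C where "C = cyl (Suc n) y"
  have "B \<subseteq> U" "C \<subseteq> U" using n by (auto simp: B_def C_def y_def cyl_def)
  moreover have "B \<inter> C = {}" by (auto simp: B_def C_def y_def cyl_def)
  moreover have "x \<in> B" "y \<in> C" by (auto simp: B_def C_def)
  ultimately have f: "B \<subseteq> U" "C \<subseteq> U" "B \<inter> C = {}" "B \<noteq> {}" "C \<noteq> {}" by blast+
  have cB: "clopen B" and cC: "clopen C" unfolding B_def C_def by (rule clopen_cyl)+
  from f cB cC show ?thesis by (intro that)
qed

lemma separate:
  assumes f: "continuous_map cantor cantor f" and p: "f p \<noteq> p" and U: "openin cantor U" "p \<in> U"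
  obtains V where "clopen V" "p \<in> V" "V \<subseteq> U" "f ` V \<inter> V = {}"
proof -
  obtain m where m: "f p m \<noteq> p m" using p by (auto simp: fun_eq_iff)
  have "openin cantor {x. f x \<in> cyl (Suc m) (f p)}"
    using openin_continuous_map_preimage[OF f, of "cyl (Suc m) (f p)"] clopen_cyl[of "Suc m" "f p"]
    by (simp add: clopen_def)
  moreover have "p \<in> {x. f x \<in> cyl (Suc m) (f p)}" by simp
  ultimately obtain n1 where n1: "cyl n1 p \<subseteq> {x. f x \<in> cyl (Suc m) (f p)}"
    unfolding open_cantor_iff by blast
  obtain n2 where n2: "cyl n2 p \<subseteq> U" using U unfolding open_cantor_iff by blast
  define V where "V = cyl (max (max n1 n2) (Suc m)) p"
  have "V \<subseteq> cyl n1 p" "V \<subseteq> cyl n2 p" "V \<subseteq> cyl (Suc m) p" unfolding V_def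
    by (auto intro!: cyl_mono)
  then have VU: "V \<subseteq> U" using n2 by blast
  have "f ` V \<inter> V = {}"
  proof (rule ccontr)
    assume "f ` V \<inter> V \<noteq> {}"
    then obtain x where x: "x \<in> V" "f x \<in> V" by blast
    have "f x \<in> cyl (Suc m) (f p)" using x(1) \<open>V \<subseteq> cyl n1 p\<close> n1 by blast
    then have "f x m = f p m" by (simp add: cyl_def)
    moreover have "f x \<in> cyl (Suc m) p" using x(2) \<open>V \<subseteq> cyl (Suc m) p\<close> by blast
    then have "f x m = p m" by (simp add: cyl_def)
    ultimately show False using m by simp
  qed
  moreover have "p \<in> V" "clopen V" unfolding V_def by (simp_all add: clopen_cyl)
  ultimately show ?thesis using VU by (intro that)
qed


abbreviation finv :: "('a \<Rightarrow> 'b) \<Rightarrow> 'b \<Rightarrow> 'a" where "finv f \<equiv> Hilbert_Choice.inv f"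

lemma Homeo_bij: "f \<in> Homeo \<Longrightarrow> bij f"
  unfolding Homeo_def bij_def
  using homeomorphic_imp_injective_map[of cantor cantor f] homeomorphic_imp_surjective_map[of cantor cantor f]
  by simp

lemma Homeo_cont: "f \<in> Homeo \<Longrightarrow> continuous_map cantor cantor f"
  unfolding Homeo_def by (simp add: homeomorphic_imp_continuous_map)

lemma Homeo_inv: "f \<in> Homeo \<Longrightarrow> finv f \<in> Homeo"
proof -
  assume f: "f \<in> Homeo"
  then obtain g where g: "homeomorphic_maps cantor cantor f g"
    unfolding Homeo_def using homeomorphic_map_maps by blast
  then have "\<forall>x. g (f x) = x" "\<forall>y. f (g y) = y" unfolding homeomorphic_maps_def by auto
  then have "finv f = g" by (intro Hilbert_Choice.inv_equality) auto
  then show ?thesis using g homeomorphic_maps_map[of cantor cantor f g] unfolding Homeo_def by auto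
qed

lemma Homeo_comp: "f \<in> Homeo \<Longrightarrow> g \<in> Homeo \<Longrightarrow> g \<circ> f \<in> Homeo"
  unfolding Homeo_def using homeomorphic_map_compose by blast

lemma Homeo_id: "id \<in> Homeo"
  unfolding Homeo_def by simp

lemma Homeo_inv_l[simp]: "f \<in> Homeo \<Longrightarrow> finv f (f x) = x"
  using Homeo_bij bij_is_inj inv_f_f by fastforce
lemma Homeo_inv_r[simp]: "f \<in> Homeo \<Longrightarrow> f (finv f x) = x"
  using Homeo_bij bij_is_surj surj_f_inv_f by fastforce

lemma group_homeo: "group homeo_group"
proof (rule groupI)
  fix x assume "x \<in> carrier homeo_group"
  then have x: "x \<in> Homeo" by (simp add: homeo_group_def)
  have i: "finv x \<in> Homeo" by (rule Homeo_inv[OF x])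
  have "x \<circ> finv x = id" using Homeo_inv_r[OF x] by (simp add: fun_eq_iff)
  then show "\<exists>y\<in>carrier homeo_group. y \<otimes>\<^bsub>homeo_group\<^esub> x = \<one>\<^bsub>homeo_group\<^esub>"
    using i by (intro bexI[of _ "finv x"]) (simp_all add: homeo_group_def)
qed (simp_all add: homeo_group_def Homeo_comp Homeo_id o_assoc)

lemma inv_homeo: "f \<in> Homeo \<Longrightarrow> inv\<^bsub>homeo_group\<^esub> f = finv f"
  apply (rule group.inv_equality[OF group_homeo])
  by (simp_all add: homeo_group_def fun_eq_iff Homeo_inv)

lemma carrier_homeo[simp]: "carrier homeo_group = Homeo" by (simp add: homeo_group_def)
lemma mult_homeo[simp]: "f \<otimes>\<^bsub>homeo_group\<^esub> g = g \<circ> f" by (simp add: homeo_group_def)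
lemma one_homeo[simp]: "\<one>\<^bsub>homeo_group\<^esub> = id" by (simp add: homeo_group_def)

lemma commutator_fun: "a \<in> Homeo \<Longrightarrow> b \<in> Homeo \<Longrightarrow> commutator a b = b \<circ> a \<circ> finv b \<circ> finv a"
  by (simp add: commutator_def inv_homeo o_assoc)

lemma sg_Homeo: "subgroup S homeo_group \<Longrightarrow> S \<subseteq> Homeo"
  using subgroup.subset by fastforce
lemma sg_comp: "subgroup S homeo_group \<Longrightarrow> f \<in> S \<Longrightarrow> g \<in> S \<Longrightarrow> g \<circ> f \<in> S"
  using subgroup.m_closed by fastforce
lemma sg_inv: "subgroup S homeo_group \<Longrightarrow> f \<in> S \<Longrightarrow> finv f \<in> S"
proof -
  assume S: "subgroup S homeo_group" and f: "f \<in> S"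
  have "inv\<^bsub>homeo_group\<^esub> f \<in> S" using subgroup.m_inv_closed[OF S f] .
  moreover have "f \<in> Homeo" using f sg_Homeo[OF S] by blast
  ultimately show "finv f \<in> S" by (simp add: inv_homeo)
qed
lemma sg_id: "subgroup S homeo_group \<Longrightarrow> id \<in> S"
  using subgroup.one_closed by fastforce

lemma normal_sub:
  assumes H: "subgroup H homeo_group" and N: "N \<lhd> homeo_group\<lparr>carrier := H\<rparr>"
  shows "subgroup N homeo_group" "N \<subseteq> H"
    "\<And>h n. h \<in> H \<Longrightarrow> n \<in> N \<Longrightarrow> h \<circ> n \<circ> finv h \<in> N"
    "\<And>h n. h \<in> H \<Longrightarrow> n \<in> N \<Longrightarrow> finv h \<circ> n \<circ> h \<in> N"
proof -
  have sN: "subgroup N (homeo_group\<lparr>carrier := H\<rparr>)" using N normal_imp_subgroup by blast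
  show "subgroup N homeo_group" using group.incl_subgroup[OF group_homeo H sN] .
  show "N \<subseteq> H" using subgroup.subset[OF sN] by simp
  fix h n assume h: "h \<in> H" and n: "n \<in> N"
  have hH: "h \<in> Homeo" using h sg_Homeo[OF H] by blast
  have "h \<otimes>\<^bsub>homeo_group\<lparr>carrier := H\<rparr>\<^esub> n \<otimes>\<^bsub>homeo_group\<lparr>carrier := H\<rparr>\<^esub> inv\<^bsub>homeo_group\<lparr>carrier := H\<rparr>\<^esub> h \<in> N"
    using normal.inv_op_closed2[OF N, of h n] h n by simp
  then show "finv h \<circ> n \<circ> h \<in> N"
    using group.m_inv_consistent[OF group_homeo H h] inv_homeo[OF hH] by (simp add: o_assoc)
  have "inv\<^bsub>homeo_group\<lparr>carrier := H\<rparr>\<^esub> h \<otimes>\<^bsub>homeo_group\<lparr>carrier := H\<rparr>\<^esub> n \<otimes>\<^bsub>homeo_group\<lparr>carrier := H\<rparr>\<^esub> h \<in> N"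
    using normal.inv_op_closed1[OF N, of h n] h n by simp
  then show "h \<circ> n \<circ> finv h \<in> N"
    using group.m_inv_consistent[OF group_homeo H h] inv_homeo[OF hH] by (simp add: o_assoc)
qed

lemma mk_normal:
  assumes G: "subgroup G homeo_group" and MG: "M \<subseteq> G" and M: "subgroup M homeo_group"
    and conj: "\<And>g m. g \<in> G \<Longrightarrow> m \<in> M \<Longrightarrow> finv g \<circ> m \<circ> g \<in> M"
  shows "M \<lhd> homeo_group\<lparr>carrier := G\<rparr>"
proof -
  have grp: "group (homeo_group\<lparr>carrier := G\<rparr>)"
    using group.subgroup_imp_group[OF group_homeo G] .
  have sM: "subgroup M (homeo_group\<lparr>carrier := G\<rparr>)"
    using group.subgroup_incl[OF group_homeo M G MG] .
  show ?thesis
    unfolding group.normal_inv_iff[OF grp]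
  proof (intro conjI sM ballI)
    fix x h assume x: "x \<in> carrier (homeo_group\<lparr>carrier := G\<rparr>)" and h: "h \<in> M"
    have xG: "x \<in> G" using x by simp
    have "x \<in> Homeo" using xG sg_Homeo[OF G] by blast
    then show "x \<otimes>\<^bsub>homeo_group\<lparr>carrier := G\<rparr>\<^esub> h \<otimes>\<^bsub>homeo_group\<lparr>carrier := G\<rparr>\<^esub> inv\<^bsub>homeo_group\<lparr>carrier := G\<rparr>\<^esub> x \<in> M"
      using group.m_inv_consistent[OF group_homeo G xG] inv_homeo conj[OF xG h] by (simp add: o_assoc)
  qed
qed

lemma mk_subgroup:
  assumes "M \<subseteq> Homeo" "id \<in> M" "\<And>a b. a \<in> M \<Longrightarrow> b \<in> M \<Longrightarrow> b \<circ> a \<in> M"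
    "\<And>a. a \<in> M \<Longrightarrow> finv a \<in> M"
  shows "subgroup M homeo_group"
  using assms by (intro subgroup.intro) (auto simp: inv_homeo subset_iff)


lemma supp_iff: "x \<in> supp f \<longleftrightarrow> f x \<noteq> x"
  by (simp add: supp_def)

lemma supp_inv: "f \<in> Homeo \<Longrightarrow> supp (finv f) = supp f"
proof -
  assume f: "f \<in> Homeo"
  have "finv f x \<noteq> x \<longleftrightarrow> f x \<noteq> x" for x
    by (metis Homeo_inv_l Homeo_inv_r f)
  then show ?thesis by (simp add: supp_def)
qed

lemma supp_closed: "f \<in> Homeo \<Longrightarrow> supp f \<subseteq> A \<Longrightarrow> x \<in> A \<Longrightarrow> f x \<in> A"
proof -
  assume f: "f \<in> Homeo" and s: "supp f \<subseteq> A" and x: "x \<in> A"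
  show "f x \<in> A"
  proof (cases "f x = x")
    case True then show ?thesis using x by metis
  next
    case False
    have "f (f x) \<noteq> f x"
    proof
      assume "f (f x) = f x"
      then have "finv f (f (f x)) = finv f (f x)" by simp
      then show False using False f by (metis Homeo_inv_l)
    qed
    then have "f x \<in> supp f" by (simp add: supp_def)
    then show ?thesis using s by blast
  qed
qed

lemma fix_outside: "supp f \<inter> A = {} \<Longrightarrow> x \<in> A \<Longrightarrow> f x = x"
proof -
  assume a: "supp f \<inter> A = {}" "x \<in> A"
  then have "x \<notin> supp f" by blast
  then show "f x = x" by (metis supp_iff)
qed

lemma fix_outside': "supp f \<subseteq> A \<Longrightarrow> x \<notin> A \<Longrightarrow> f x = x"
proof -
  assume a: "supp f \<subseteq> A" "x \<notin> A"
  then have "x \<notin> supp f" by blast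
  then show "f x = x" by (metis supp_iff)
qed

lemma disj_commute:
  assumes f: "f \<in> Homeo" and g: "g \<in> Homeo" and d: "supp f \<inter> supp g = {}"
  shows "f (g x) = g (f x)"
proof (cases "x \<in> supp g")
  case True
  have "g x \<in> supp g" using supp_closed[OF g order_refl True] .
  then have e1: "f (g x) = g x" using fix_outside[OF d] by metis
  have "x \<notin> supp f" using True d by blast
  then have e2: "f x = x" by (metis supp_iff)
  from e1 e2 show ?thesis by metis
next
  case False
  then have gx: "g x = x" by (metis supp_iff)
  show ?thesis
  proof (cases "x \<in> supp f")
    case True
    have "f x \<in> supp f" using supp_closed[OF f order_refl True] .
    then have "f x \<notin> supp g" using d by blast
    then have "g (f x) = f x" by (metis supp_iff)
    then show ?thesis using gx by metis
  next
    case False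
    then have "f x = x" by (metis supp_iff)
    then show ?thesis using gx by metis
  qed
qed

lemma vig_apply:
  assumes "vigorous S" "clopen A" "clopen B" "clopen C" "B \<noteq> {}" "C \<noteq> {}" "B \<subset> A" "C \<subset> A"
  shows "\<exists>g\<in>S. supp g \<subseteq> A \<and> g ` B \<subseteq> C"
  using assms unfolding vigorous_def by blast

lemma vig_nontriv:
  assumes v: "vigorous S" and U: "clopen U" "U \<noteq> {}"
  shows "\<exists>g\<in>S. supp g \<subseteq> U \<and> g \<noteq> id"
proof -
  have Uo: "openin cantor U" using U by (simp add: clopen_def)
  obtain B C where BC: "clopen B" "clopen C" "B \<noteq> {}" "C \<noteq> {}" "B \<subseteq> U" "C \<subseteq> U" "B \<inter> C = {}"
    by (rule split_open[OF Uo U(2)])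
  have "B \<noteq> U"
  proof
    assume "B = U"
    then have "C \<subseteq> B" using BC(6) by simp
    then have "C = {}" using BC(7) by blast
    then show False using BC(4) by simp
  qed
  then have BU: "B \<subset> U" using BC(5) by (rule psubsetI[rotated])
  have "C \<noteq> U"
  proof
    assume "C = U"
    then have "B \<subseteq> C" using BC(5) by simp
    then have "B = {}" using BC(7) by blast
    then show False using BC(3) by simp
  qed
  then have CU: "C \<subset> U" using BC(6) by (rule psubsetI[rotated])
  obtain g where g: "g \<in> S" "supp g \<subseteq> U" "g ` B \<subseteq> C"
    using vig_apply[OF v U(1) BC(1) BC(2) BC(3) BC(4) BU CU] by blast
  obtain b where b: "b \<in> B" using BC(3) by blast
  then have gbB: "g b \<in> g ` B" by (rule imageI)
  have gbC: "g b \<in> C" using g(3) gbB by (rule subsetD)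
  have "b \<notin> C" using b BC(7) by blast
  then have "g b \<noteq> b" using gbC by metis
  have "g \<noteq> id"
  proof
    assume "g = id"
    then show False using \<open>g b \<noteq> b\<close> by simp
  qed
  with g(1,2) show ?thesis by (intro bexI[of _ g] conjI)
qed

lemma Homeo_inv_comp: "f \<in> Homeo \<Longrightarrow> g \<in> Homeo \<Longrightarrow> finv (g \<circ> f) = finv f \<circ> finv g"
  by (intro Hilbert_Choice.inv_equality) auto

lemma commutator_Homeo: "a \<in> Homeo \<Longrightarrow> b \<in> Homeo \<Longrightarrow> commutator a b \<in> Homeo"
  by (simp add: commutator_fun Homeo_comp Homeo_inv)

lemma comm_trick:
  assumes v: "vigorous S" and S: "S \<subseteq> Homeo" and n: "n \<in> Homeo" "n \<noteq> id"
  shows "\<exists>g\<in>S. \<exists>k\<in>S. commutator (commutator n g) k = commutator g k \<and> commutator g k \<noteq> id"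
proof -
  obtain p where p: "n p \<noteq> p" using n(2) by (auto simp: fun_eq_iff)
  obtain U where U: "clopen U" "p \<in> U" "n ` U \<inter> U = {}"
    using separate[OF Homeo_cont[OF n(1)] p openin_topspace[of cantor]] by (metis UNIV_I topspace_cantor)
  obtain k where k: "k \<in> S" "supp k \<subseteq> U" "k \<noteq> id"
    using vig_nontriv[OF v U(1)] U(2) by blast
  have kH: "k \<in> Homeo" using k S by blast
  obtain q where q: "k q \<noteq> q" using k(3) by (auto simp: fun_eq_iff)
  have qU: "q \<in> U" using q k(2) by (auto simp: supp_def)
  have Uo: "openin cantor U" using U by (simp add: clopen_def)
  obtain V where V: "clopen V" "q \<in> V" "V \<subseteq> U" "k ` V \<inter> V = {}"
    using separate[OF Homeo_cont[OF kH] q Uo qU] by metis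
  obtain g where g: "g \<in> S" "supp g \<subseteq> V" "g \<noteq> id"
    using vig_nontriv[OF v V(1)] V(2) by blast
  have gH: "g \<in> Homeo" using g S by blast
  define y where "y = n \<circ> finv g \<circ> finv n"
  have yH: "y \<in> Homeo" unfolding y_def by (simp add: Homeo_comp Homeo_inv n gH)
  have suppy: "supp y \<subseteq> n ` U"
  proof
    fix z assume z: "z \<in> supp y"
    have "finv n z \<in> supp (finv g)"
    proof (rule ccontr)
      assume "finv n z \<notin> supp (finv g)"
      then have "finv g (finv n z) = finv n z" by (simp add: supp_def)
      then have "y z = z" using n(1) by (simp add: y_def)
      then show False using z by (metis supp_iff)
    qed
    then have "finv n z \<in> U" using supp_inv[OF gH] g(2) V(3) by blast
    moreover have "z = n (finv n z)" using n(1) by simp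
    ultimately show "z \<in> n ` U" by blast
  qed
  have dk: "supp y \<inter> supp (finv k) = {}"
    using suppy supp_inv[OF kH] k(2) U(3) by blast
  have yk: "y (finv k z) = finv k (y z)" for z
    using disj_commute[OF yH Homeo_inv[OF kH] dk] .
  have cng: "commutator n g = g \<circ> y"
    by (simp add: commutator_fun n(1) gH y_def o_assoc)
  have gyH: "g \<circ> y \<in> Homeo" using Homeo_comp[OF yH gH] .
  have eq: "commutator (commutator n g) k = commutator g k"
  proof -
    have "commutator (g \<circ> y) k = k \<circ> (g \<circ> y) \<circ> finv k \<circ> (finv y \<circ> finv g)"
      by (simp add: commutator_fun gyH kH Homeo_inv_comp yH gH)
    also have "\<dots> = k \<circ> g \<circ> finv k \<circ> finv g"
    proof (rule ext)
      fix x
      have "y (finv k (finv y (finv g x))) = finv k (finv g x)"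
        using yk[of "finv y (finv g x)"] yH by simp
      then show "(k \<circ> (g \<circ> y) \<circ> finv k \<circ> (finv y \<circ> finv g)) x = (k \<circ> g \<circ> finv k \<circ> finv g) x"
        by simp
    qed
    also have "\<dots> = commutator g k" by (simp add: commutator_fun gH kH)
    finally show ?thesis using cng by simp
  qed
  obtain r where r: "g r \<noteq> r" using g(3) by (auto simp: fun_eq_iff)
  have rV: "r \<in> V" using r g(2) by (auto simp: supp_def)
  have "finv k r \<notin> V"
  proof
    assume "finv k r \<in> V"
    then have "k (finv k r) \<in> k ` V" by blast
    then have "r \<in> k ` V" using kH by simp
    then show False using rV V(4) by blast
  qed
  then have gk: "g (finv k r) = finv k r" using fix_outside'[OF g(2)] by blast
  have "commutator g k (g r) = r"
    using gk kH gH by (simp add: commutator_fun)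
  then have "commutator g k \<noteq> id" using r by (metis id_apply)
  then show ?thesis using eq g(1) k(1) by blast
qed


lemma Homeo_inv_inv: "f \<in> Homeo \<Longrightarrow> finv (finv f) = f"
  using Homeo_bij inv_inv_eq by blast

lemma supp_conj: "g \<in> Homeo \<Longrightarrow> z \<in> supp (finv g \<circ> k \<circ> g) \<Longrightarrow> g z \<in> supp k"
proof -
  assume g: "g \<in> Homeo" and z: "z \<in> supp (finv g \<circ> k \<circ> g)"
  show "g z \<in> supp k"
  proof (rule ccontr)
    assume "g z \<notin> supp k"
    then have "k (g z) = g z" by (metis supp_iff)
    then have "(finv g \<circ> k \<circ> g) z = z" using g by simp
    then show False using z by (metis supp_iff)
  qed
qed

locale setting =
  fixes G :: "(point \<Rightarrow> point) set" and D :: "point set"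
    and \<gamma> \<delta> :: "point \<Rightarrow> point"
  assumes G_sub: "subgroup G homeo_group"
    and G_simple: "simple_subgroup G"
    and G_vig: "vigorous G"
    and D_K: "D \<in> K_C"
    and \<gamma>_G: "\<gamma> \<in> G"
    and disj: "\<gamma> ` D \<inter> D = {}"
    and nonfull: "\<gamma> ` D \<union> D \<noteq> topspace cantor"
    and \<delta>_homeo: "\<delta> \<in> Homeo"
    and \<delta>_fix: "\<forall>p \<in> topspace cantor - D. \<delta> p = p"
begin

definition HH where "HH = generate homeo_group (G \<union> {commutator \<delta> \<gamma>})"
definition cm where "cm f = commutator \<delta> f"

lemma GH: "G \<subseteq> Homeo" by (rule sg_Homeo[OF G_sub])
lemma \<gamma>H: "\<gamma> \<in> Homeo" using GH \<gamma>_G by blast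
lemma c_Homeo: "commutator \<delta> \<gamma> \<in> Homeo" by (rule commutator_Homeo[OF \<delta>_homeo \<gamma>H])

lemma gen_sub: "G \<union> {commutator \<delta> \<gamma>} \<subseteq> carrier homeo_group"
  using GH c_Homeo by simp

lemma HH_sub: "subgroup HH homeo_group"
  unfolding HH_def by (rule group.generate_is_subgroup[OF group_homeo gen_sub])

lemma G_in_HH: "G \<subseteq> HH"
  unfolding HH_def by (auto intro: generate.incl)

lemma c_in_HH: "commutator \<delta> \<gamma> \<in> HH"
  unfolding HH_def by (auto intro: generate.incl)

lemma D_clopen: "clopen D" and D_ne: "D \<noteq> {}" and D_nU: "D \<noteq> UNIV"
  using D_K by (auto simp: K_C_def)

lemma supp_\<delta>: "supp \<delta> \<subseteq> D"
proof
  fix x assume x: "x \<in> supp \<delta>"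
  show "x \<in> D"
  proof (rule ccontr)
    assume "x \<notin> D"
    then have "\<delta> x = x" using \<delta>_fix by simp
    then show False using x by (metis supp_iff)
  qed
qed

lemma cm_fun: "f \<in> Homeo \<Longrightarrow> cm f = f \<circ> \<delta> \<circ> finv f \<circ> finv \<delta>"
  by (simp add: cm_def commutator_fun \<delta>_homeo)

lemma cm_F: assumes f: "f \<in> Homeo" and d: "supp f \<inter> D = {}" shows "cm f = id"
proof -
  have dd: "supp f \<inter> supp \<delta> = {}" using d supp_\<delta> by blast
  have comm: "f (\<delta> x) = \<delta> (f x)" for x by (rule disj_commute[OF f \<delta>_homeo dd])
  show ?thesis
    by (rule ext) (simp add: cm_fun f comm \<delta>_homeo)
qed

lemma cm_id: "cm id = id"
  by (rule ext) (simp add: cm_fun Homeo_id \<delta>_homeo inv_id)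

lemma cm_comp: "f \<in> Homeo \<Longrightarrow> g \<in> Homeo \<Longrightarrow> cm (g \<circ> f) = (g \<circ> cm f \<circ> finv g) \<circ> cm g"
  by (rule ext) (simp add: cm_fun Homeo_comp Homeo_inv_comp \<delta>_homeo)

lemma inv_cm: "f \<in> Homeo \<Longrightarrow> finv (cm f) = \<delta> \<circ> f \<circ> finv \<delta> \<circ> finv f"
  by (intro Hilbert_Choice.inv_equality) (simp_all add: cm_fun \<delta>_homeo)

lemma cm_inv: assumes f: "f \<in> Homeo" shows "cm (finv f) = finv f \<circ> finv (cm f) \<circ> f"
proof -
  have i: "finv f \<in> Homeo" using Homeo_inv[OF f] .
  have 1: "cm (finv f) = finv f \<circ> \<delta> \<circ> f \<circ> finv \<delta>" using cm_fun[OF i] Homeo_inv_inv[OF f] by simp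
  have 2: "finv (cm f) = \<delta> \<circ> f \<circ> finv \<delta> \<circ> finv f" by (rule inv_cm[OF f])
  show ?thesis unfolding 1 2 by (rule ext) (simp add: f)
qed

lemma cm_conj: "g \<in> Homeo \<Longrightarrow> w \<in> Homeo \<Longrightarrow>
   cm (g \<circ> w \<circ> finv g) = (g \<circ> w \<circ> finv g) \<circ> (finv (cm g) \<circ> (g \<circ> finv w \<circ> cm w \<circ> finv g) \<circ> cm g)"
  by (rule ext) (simp add: cm_fun inv_cm Homeo_inv Homeo_comp Homeo_inv_comp Homeo_inv_inv \<delta>_homeo)

definition W where "W T = {w \<in> G. cm w \<in> T}"

lemma W_sub:
  assumes T: "subgroup T homeo_group" and conj: "\<And>h t. h \<in> G \<Longrightarrow> t \<in> T \<Longrightarrow> h \<circ> t \<circ> finv h \<in> T"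
  shows "subgroup (W T) homeo_group"
proof (rule mk_subgroup)
  show "W T \<subseteq> Homeo" using GH by (auto simp: W_def)
  show "id \<in> W T" using sg_id[OF G_sub] sg_id[OF T] by (simp add: W_def cm_id)
next
  fix a b assume a: "a \<in> W T" and b: "b \<in> W T"
  have aG: "a \<in> G" and bG: "b \<in> G" and ca: "cm a \<in> T" and cb: "cm b \<in> T"
    using a b by (auto simp: W_def)
  have aH: "a \<in> Homeo" and bH: "b \<in> Homeo" using aG bG GH by auto
  have "b \<circ> cm a \<circ> finv b \<in> T" using conj[OF bG ca] .
  then have "cm (b \<circ> a) \<in> T" using cm_comp[OF aH bH] sg_comp[OF T cb] by simp
  moreover have "b \<circ> a \<in> G" using sg_comp[OF G_sub aG bG] .
  ultimately show "b \<circ> a \<in> W T" by (simp add: W_def)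
next
  fix a assume a: "a \<in> W T"
  have aG: "a \<in> G" and ca: "cm a \<in> T" using a by (auto simp: W_def)
  have aH: "a \<in> Homeo" using aG GH by auto
  have iaG: "finv a \<in> G" using sg_inv[OF G_sub aG] .
  have "finv a \<circ> finv (cm a) \<circ> finv (finv a) \<in> T" using conj[OF iaG sg_inv[OF T ca]] .
  then have "cm (finv a) \<in> T" using cm_inv[OF aH] Homeo_inv_inv[OF aH] by simp
  then show "finv a \<in> W T" using iaG by (simp add: W_def)
qed

lemma HH_conj: "h \<in> G \<Longrightarrow> t \<in> HH \<Longrightarrow> h \<circ> t \<circ> finv h \<in> HH"
proof -
  assume h: "h \<in> G" and t: "t \<in> HH"
  have hH: "h \<in> HH" using h G_in_HH by blast
  show ?thesis using sg_comp[OF HH_sub sg_inv[OF HH_sub hH] sg_comp[OF HH_sub t hH]] by simp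
qed

lemma WH_sub: "subgroup (W HH) homeo_group"
  by (rule W_sub[OF HH_sub HH_conj])

lemma F_in_W: "f \<in> G \<Longrightarrow> supp f \<inter> D = {} \<Longrightarrow> subgroup T homeo_group \<Longrightarrow> f \<in> W T"
  using cm_F GH sg_id by (auto simp: W_def)

lemma \<gamma>_in_WH: "\<gamma> \<in> W HH"
  using \<gamma>_G c_in_HH by (simp add: W_def cm_def)

definition R where "R = {k \<in> G. \<exists>g\<in>G. supp k \<inter> g ` D = {}}"

lemma R_G: "R \<subseteq> G" by (auto simp: R_def)

lemma F_nontriv: "\<exists>f\<in>G. supp f \<subseteq> - D \<and> f \<noteq> id"
proof -
  have "clopen (- D)" using clopen_Compl[OF D_clopen] .
  moreover have "- D \<noteq> {}" using D_nU by auto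
  ultimately show ?thesis using vig_nontriv[OF G_vig] by blast
qed

lemma R_conj: assumes g: "g \<in> G" and k: "k \<in> R" shows "finv g \<circ> k \<circ> g \<in> R"
proof -
  obtain g0 where g0: "g0 \<in> G" "k \<in> G" "supp k \<inter> g0 ` D = {}" using k by (auto simp: R_def)
  have gH: "g \<in> Homeo" using g GH by blast
  have ig: "finv g \<in> G" using sg_inv[OF G_sub g] .
  have kG: "finv g \<circ> k \<circ> g \<in> G" using sg_comp[OF G_sub g sg_comp[OF G_sub g0(2) ig]] by (simp add: o_assoc)
  have g0': "finv g \<circ> g0 \<in> G" using sg_comp[OF G_sub g0(1) ig] .
  have "supp (finv g \<circ> k \<circ> g) \<inter> (finv g \<circ> g0) ` D = {}"
  proof (rule ccontr)
    assume "supp (finv g \<circ> k \<circ> g) \<inter> (finv g \<circ> g0) ` D \<noteq> {}"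
    then obtain z d where z: "z \<in> supp (finv g \<circ> k \<circ> g)" "d \<in> D" "z = finv g (g0 d)" by auto
    have "g z \<in> supp k" using supp_conj[OF gH z(1)] .
    moreover have "g z = g0 d" using z(3) gH by simp
    ultimately have "g0 d \<in> supp k \<inter> g0 ` D" using z(2) by simp
    then show False using g0(3) by blast
  qed
  then have ex: "\<exists>g'\<in>G. supp (finv g \<circ> k \<circ> g) \<inter> g' ` D = {}" using g0' by (rule bexI)
  show ?thesis unfolding R_def using kG ex by (intro CollectI conjI)
qed

definition M where "M = generate homeo_group R"

lemma R_Homeo: "R \<subseteq> carrier homeo_group" using R_G GH by simp

lemma M_sub: "subgroup M homeo_group"
  unfolding M_def by (rule group.generate_is_subgroup[OF group_homeo R_Homeo])

lemma M_G: "M \<subseteq> G"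
  unfolding M_def by (rule group.generate_subgroup_incl[OF group_homeo R_G G_sub])

lemma M_conj: assumes g: "g \<in> G" and m: "m \<in> M" shows "finv g \<circ> m \<circ> g \<in> M"
  using m unfolding M_def
proof (induction m rule: generate.induct)
  case one
  have gH: "g \<in> Homeo" using g GH by blast
  have "finv g \<circ> \<one>\<^bsub>homeo_group\<^esub> \<circ> g = \<one>\<^bsub>homeo_group\<^esub>" by (rule ext) (simp add: gH)
  then show ?case by (simp only: generate.one)
next
  case (incl h)
  then show ?case by (rule generate.incl[OF R_conj[OF g]])
next
  case (inv h)
  have gH: "g \<in> Homeo" using g GH by blast
  have hH: "h \<in> Homeo" using inv R_G GH by blast
  have "finv g \<circ> h \<circ> g \<in> generate homeo_group R" by (rule generate.incl[OF R_conj[OF g inv]])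
  then have "finv (finv g \<circ> h \<circ> g) \<in> generate homeo_group R"
    by (rule sg_inv[OF M_sub[unfolded M_def]])
  moreover have "finv (finv g \<circ> h \<circ> g) = finv g \<circ> finv h \<circ> g"
    by (intro Hilbert_Choice.inv_equality) (simp_all add: gH hH)
  ultimately have X: "finv g \<circ> finv h \<circ> g \<in> generate homeo_group R" by (simp only:)
  then show ?case by (simp only: inv_homeo[OF hH])
next
  case (eng h1 h2)
  have gH: "g \<in> Homeo" using g GH by blast
  have e: "finv g \<circ> (h2 \<circ> h1) \<circ> g = (finv g \<circ> h2 \<circ> g) \<circ> (finv g \<circ> h1 \<circ> g)"
    by (rule ext) (simp add: gH)
  show ?case unfolding mult_homeo e using sg_comp[OF M_sub[unfolded M_def] eng.IH(1) eng.IH(2)] .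
qed

lemma M_normal: "M \<lhd> homeo_group\<lparr>carrier := G\<rparr>"
  by (rule mk_normal[OF G_sub M_G M_sub M_conj])

lemma M_eq: "M = G"
proof -
  obtain f where f: "f \<in> G" "supp f \<subseteq> - D" "f \<noteq> id" using F_nontriv by blast
  have "supp f \<inter> D = {}" using f(2) by blast
  then have "supp f \<inter> id ` D = {}" by simp
  then have ex: "\<exists>g'\<in>G. supp f \<inter> g' ` D = {}" using sg_id[OF G_sub] by (rule bexI)
  have "f \<in> R" unfolding R_def using f(1) ex by (intro CollectI conjI)
  then have "f \<in> M" unfolding M_def by (rule generate.incl)
  have "M \<noteq> {id}"
  proof
    assume "M = {id}"
    with \<open>f \<in> M\<close> have "f = id" by simp
    with f(3) show False by simp
  qed
  moreover have "M = {id} \<or> M = G" using G_simple M_normal unfolding simple_subgroup_def by blast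
  ultimately show ?thesis by simp
qed

end


context setting
begin

lemma clopen_gD: "clopen (\<gamma> ` D)" using Homeo_clopen_image[OF \<gamma>H D_clopen] .

lemma gD_psub: "\<gamma> ` D \<subset> - D"
proof -
  have sub: "\<gamma> ` D \<subseteq> - D" using disj by blast
  have "\<gamma> ` D \<noteq> - D"
  proof
    assume "\<gamma> ` D = - D"
    then have "\<gamma> ` D \<union> D = UNIV" by simp
    then show False using nonfull by simp
  qed
  with sub show ?thesis by (rule psubsetI)
qed

lemma gD_ne: "\<gamma> ` D \<noteq> {}" using D_ne by simp

lemma WH_comp: "a \<in> W HH \<Longrightarrow> b \<in> W HH \<Longrightarrow> b \<circ> a \<in> W HH"
  by (rule sg_comp[OF WH_sub])
lemma WH_inv: "a \<in> W HH \<Longrightarrow> finv a \<in> W HH"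
  by (rule sg_inv[OF WH_sub])

lemma move: assumes g0: "g0 \<in> G" shows "\<exists>w\<in>W HH. w ` D \<subseteq> g0 ` D"
proof -
  have g0H: "g0 \<in> Homeo" using g0 GH by blast
  define E where "E = g0 ` D"
  have Ec: "clopen E" unfolding E_def by (rule Homeo_clopen_image[OF g0H D_clopen])
  have Ene: "E \<noteq> {}" using D_ne by (simp add: E_def)
  have cD: "clopen (- D)" by (rule clopen_Compl[OF D_clopen])
  have \<gamma>W: "\<gamma> \<in> W HH" by (rule \<gamma>_in_WH)
  show ?thesis
  proof (cases "E \<inter> D = {}")
    case False
    define V where "V = E \<inter> D"
    have Vc: "clopen V" unfolding V_def by (rule clopen_Int[OF Ec D_clopen])
    have Vne: "V \<noteq> {}" using False by (simp add: V_def)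
    have \<gamma>Vc: "clopen (\<gamma> ` V)" by (rule Homeo_clopen_image[OF \<gamma>H Vc])
    have \<gamma>Vne: "\<gamma> ` V \<noteq> {}" using Vne by simp
    have "\<gamma> ` V \<subseteq> \<gamma> ` D" unfolding V_def by (rule image_mono) blast
    then have \<gamma>Vp: "\<gamma> ` V \<subset> - D" using gD_psub by (rule subset_psubset_trans)
    obtain f where f: "f \<in> G" "supp f \<subseteq> - D" "f ` (\<gamma> ` D) \<subseteq> \<gamma> ` V"
      using vig_apply[OF G_vig cD clopen_gD \<gamma>Vc gD_ne \<gamma>Vne gD_psub \<gamma>Vp] by blast
    have "supp f \<inter> D = {}" using f(2) by blast
    then have fW: "f \<in> W HH" using F_in_W[OF f(1) _ HH_sub] by blast
    define w where "w = finv \<gamma> \<circ> (f \<circ> \<gamma>)"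
    have wW: "w \<in> W HH" unfolding w_def by (rule WH_comp[OF WH_comp[OF \<gamma>W fW] WH_inv[OF \<gamma>W]])
    have "w ` D \<subseteq> E"
    proof
      fix x assume "x \<in> w ` D"
      then obtain d where d: "d \<in> D" "x = w d" by blast
      have "f (\<gamma> d) \<in> \<gamma> ` V" using f(3) d(1) by blast
      then obtain v where v: "v \<in> V" "f (\<gamma> d) = \<gamma> v" by blast
      have "x = v" using d(2) v(2) \<gamma>H by (simp add: w_def)
      then show "x \<in> E" using v(1) by (simp add: V_def)
    qed
    then show ?thesis using wW unfolding E_def by blast
  next
    case True
    have Eo: "openin cantor E" using Ec by (simp add: clopen_def)
    obtain B C where BC: "clopen B" "clopen C" "B \<noteq> {}" "C \<noteq> {}" "B \<subseteq> E" "C \<subseteq> E" "B \<inter> C = {}"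
      by (rule split_open[OF Eo Ene])
    have ED: "E \<subseteq> - D" using True by blast
    have Bsub: "B \<subseteq> - D" using BC(5) ED by blast
    have "B \<noteq> - D"
    proof
      assume "B = - D"
      then have "C \<subseteq> B" using BC(6) ED by simp
      then have "C = {}" using BC(7) by blast
      then show False using BC(4) by simp
    qed
    with Bsub have Bp: "B \<subset> - D" by (rule psubsetI)
    obtain f where f: "f \<in> G" "supp f \<subseteq> - D" "f ` (\<gamma> ` D) \<subseteq> B"
      using vig_apply[OF G_vig cD clopen_gD BC(1) gD_ne BC(3) gD_psub Bp] by blast
    have "supp f \<inter> D = {}" using f(2) by blast
    then have fW: "f \<in> W HH" using F_in_W[OF f(1) _ HH_sub] by blast
    have wW: "f \<circ> \<gamma> \<in> W HH" by (rule WH_comp[OF \<gamma>W fW])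
    have e: "(f \<circ> \<gamma>) ` D = f ` (\<gamma> ` D)" by (simp only: image_comp)
    have "(f \<circ> \<gamma>) ` D \<subseteq> E" unfolding e using f(3) BC(5) by (rule subset_trans)
    then show ?thesis using wW unfolding E_def by blast
  qed
qed

lemma R_WH: assumes k: "k \<in> R" shows "k \<in> W HH"
proof -
  obtain g0 where g0: "g0 \<in> G" "k \<in> G" "supp k \<inter> g0 ` D = {}" using k by (auto simp: R_def)
  obtain w where w: "w \<in> W HH" "w ` D \<subseteq> g0 ` D" using move[OF g0(1)] by blast
  have wG: "w \<in> G" using w(1) by (simp add: W_def)
  have wH: "w \<in> Homeo" using wG GH by blast
  have kH: "k \<in> Homeo" using g0(2) GH by blast
  define k' where "k' = finv w \<circ> k \<circ> w"
  have k'G: "k' \<in> G" unfolding k'_def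
    using sg_comp[OF G_sub wG sg_comp[OF G_sub g0(2) sg_inv[OF G_sub wG]]] by (simp add: o_assoc)
  have "supp k' \<inter> D = {}"
  proof (rule ccontr)
    assume "supp k' \<inter> D \<noteq> {}"
    then obtain z where z: "z \<in> supp k'" "z \<in> D" by blast
    have "w z \<in> supp k" using supp_conj[OF wH] z(1) unfolding k'_def by blast
    moreover have "w z \<in> g0 ` D" using w(2) z(2) by blast
    ultimately show False using g0(3) by blast
  qed
  then have k'W: "k' \<in> W HH" using F_in_W[OF k'G _ HH_sub] by blast
  have "k = w \<circ> k' \<circ> finv w" unfolding k'_def by (rule ext) (simp add: wH)
  moreover have "w \<circ> k' \<circ> finv w \<in> W HH"
    by (rule WH_comp[OF WH_inv[OF w(1)] WH_comp[OF k'W w(1)]])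
  ultimately show ?thesis by simp
qed

lemma G_WH: "G \<subseteq> W HH"
proof -
  have "R \<subseteq> W HH" using R_WH by blast
  then have "generate homeo_group R \<subseteq> W HH"
    by (rule group.generate_subgroup_incl[OF group_homeo _ WH_sub])
  then show ?thesis using M_eq unfolding M_def by simp
qed

lemma cm_G_HH: "g \<in> G \<Longrightarrow> cm g \<in> HH"
  using G_WH by (auto simp: W_def)

end


context setting
begin

lemma HH_ne: "HH \<noteq> {id}"
proof
  assume a: "HH = {id}"
  have "G \<subseteq> {id}" using G_in_HH a by simp
  moreover have "id \<in> G" by (rule sg_id[OF G_sub])
  ultimately have "G = {id}" by blast
  then show False using G_simple by (simp add: simple_subgroup_def)
qed

lemma HH_normal_trivial:
  assumes N: "N \<lhd> homeo_group\<lparr>carrier := HH\<rparr>" and Nne: "N \<noteq> {id}"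
  shows "N = HH"
proof -
  have Nsub: "subgroup N homeo_group" and NH: "N \<subseteq> HH"
    and Nc1: "\<And>h n. h \<in> HH \<Longrightarrow> n \<in> N \<Longrightarrow> h \<circ> n \<circ> finv h \<in> N"
    and Nc2: "\<And>h n. h \<in> HH \<Longrightarrow> n \<in> N \<Longrightarrow> finv h \<circ> n \<circ> h \<in> N"
    using normal_sub[OF HH_sub N] by auto
  have NHo: "N \<subseteq> Homeo" by (rule sg_Homeo[OF Nsub])
  have idN: "id \<in> N" by (rule sg_id[OF Nsub])
  have "\<exists>n\<in>N. n \<noteq> id"
  proof (rule ccontr)
    assume "\<not> (\<exists>n\<in>N. n \<noteq> id)"
    then have "N \<subseteq> {id}" by blast
    with idN have "N = {id}" by blast
    with Nne show False by simp
  qed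
  then obtain n where n: "n \<in> N" "n \<noteq> id" by blast
  have nH: "n \<in> Homeo" using n(1) NHo by blast
  obtain g k where gk: "g \<in> G" "k \<in> G" "commutator (commutator n g) k = commutator g k"
      "commutator g k \<noteq> id"
    using comm_trick[OF G_vig GH nH n(2)] by blast
  have gH: "g \<in> Homeo" and kH: "k \<in> Homeo" using gk GH by auto
  have gHH: "g \<in> HH" and kHH: "k \<in> HH" using gk G_in_HH by auto
  have c1: "commutator n g \<in> N"
    unfolding commutator_fun[OF nH gH] by (rule sg_comp[OF Nsub sg_inv[OF Nsub n(1)] Nc1[OF gHH n(1)]])
  have aH: "commutator n g \<in> Homeo" by (rule commutator_Homeo[OF nH gH])
  have c2: "commutator (commutator n g) k \<in> N"
    unfolding commutator_fun[OF aH kH] by (rule sg_comp[OF Nsub sg_inv[OF Nsub c1] Nc1[OF kHH c1]])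
  have gkN: "commutator g k \<in> N" using c2 gk(3) by simp
  have gkG: "commutator g k \<in> G"
    unfolding commutator_fun[OF gH kH]
    by (rule sg_comp[OF G_sub sg_inv[OF G_sub gk(1)] sg_comp[OF G_sub sg_inv[OF G_sub gk(2)] sg_comp[OF G_sub gk(1) gk(2)]]])
  have NG_sub: "subgroup (N \<inter> G) homeo_group"
  proof (rule mk_subgroup)
    show "N \<inter> G \<subseteq> Homeo" using GH by blast
    show "id \<in> N \<inter> G" using idN sg_id[OF G_sub] by blast
  next
    fix a b assume "a \<in> N \<inter> G" "b \<in> N \<inter> G"
    then show "b \<circ> a \<in> N \<inter> G" using sg_comp[OF Nsub] sg_comp[OF G_sub] by blast
  next
    fix a assume "a \<in> N \<inter> G"
    then show "finv a \<in> N \<inter> G" using sg_inv[OF Nsub] sg_inv[OF G_sub] by blast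
  qed
  have NG_normal: "N \<inter> G \<lhd> homeo_group\<lparr>carrier := G\<rparr>"
  proof (rule mk_normal[OF G_sub _ NG_sub])
    show "N \<inter> G \<subseteq> G" by blast
  next
    fix g m assume g: "g \<in> G" and m: "m \<in> N \<inter> G"
    have "finv g \<circ> m \<circ> g \<in> N" using Nc2[of g m] g m G_in_HH by blast
    moreover have "finv g \<circ> m \<circ> g \<in> G"
      using sg_comp[OF G_sub g sg_comp[OF G_sub _ sg_inv[OF G_sub g]]] m by (simp add: o_assoc)
    ultimately show "finv g \<circ> m \<circ> g \<in> N \<inter> G" by blast
  qed
  have "N \<inter> G = {id} \<or> N \<inter> G = G"
    using G_simple NG_normal unfolding simple_subgroup_def by blast
  moreover have "N \<inter> G \<noteq> {id}"
  proof
    assume "N \<inter> G = {id}"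
    moreover have "commutator g k \<in> N \<inter> G" using gkN gkG by blast
    ultimately have "commutator g k = id" by simp
    with gk(4) show False by simp
  qed
  ultimately have "N \<inter> G = G" by simp
  then have GN: "G \<subseteq> N" by blast
  have WN_sub: "subgroup (W N) homeo_group"
    by (rule W_sub[OF Nsub]) (use G_in_HH Nc1 in blast)
  have WN_G: "W N \<subseteq> G" by (auto simp: W_def)
  have WN_normal: "W N \<lhd> homeo_group\<lparr>carrier := G\<rparr>"
  proof (rule mk_normal[OF G_sub WN_G WN_sub])
    fix g w assume g: "g \<in> G" and w: "w \<in> W N"
    have wG: "w \<in> G" and cw: "cm w \<in> N" using w by (auto simp: W_def)
    define a where "a = finv g"
    have aG: "a \<in> G" unfolding a_def by (rule sg_inv[OF G_sub g])
    have gH: "g \<in> Homeo" using g GH by blast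
    have aH: "a \<in> Homeo" using aG GH by blast
    have wH: "w \<in> Homeo" using wG GH by blast
    have eq: "finv g \<circ> w \<circ> g = a \<circ> w \<circ> finv a" unfolding a_def using Homeo_inv_inv[OF gH] by simp
    have uG: "a \<circ> w \<circ> finv a \<in> G"
      using sg_comp[OF G_sub sg_inv[OF G_sub aG] sg_comp[OF G_sub wG aG]] by (simp add: o_assoc)
    have uN: "a \<circ> w \<circ> finv a \<in> N" using uG GN by blast
    have mN: "a \<circ> finv w \<circ> cm w \<circ> finv a \<in> N"
    proof -
      have "finv w \<in> N" using sg_inv[OF G_sub wG] GN by blast
      moreover have "a \<in> N" "finv a \<in> N" using aG sg_inv[OF G_sub aG] GN by auto
      ultimately show ?thesis
        using sg_comp[OF Nsub \<open>finv a \<in> N\<close> sg_comp[OF Nsub cw sg_comp[OF Nsub \<open>finv w \<in> N\<close> \<open>a \<in> N\<close>]]]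
        by (simp add: o_assoc)
    qed
    have xHH: "cm a \<in> HH" by (rule cm_G_HH[OF aG])
    have "finv (cm a) \<circ> (a \<circ> finv w \<circ> cm w \<circ> finv a) \<circ> cm a \<in> N" by (rule Nc2[OF xHH mN])
    then have "cm (a \<circ> w \<circ> finv a) \<in> N"
      unfolding cm_conj[OF aH wH] by (rule sg_comp[OF Nsub _ uN])
    moreover have "finv g \<circ> w \<circ> g \<in> G" using uG eq by simp
    ultimately show "finv g \<circ> w \<circ> g \<in> W N" using eq by (simp add: W_def)
  qed
  obtain f where f: "f \<in> G" "supp f \<subseteq> - D" "f \<noteq> id" using F_nontriv by blast
  have "supp f \<inter> D = {}" using f(2) by blast
  then have fW: "f \<in> W N" using F_in_W[OF f(1) _ Nsub] by blast
  have "W N \<noteq> {id}"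
  proof
    assume "W N = {id}"
    with fW have "f = id" by simp
    with f(3) show False by simp
  qed
  moreover have "W N = {id} \<or> W N = G"
    using G_simple WN_normal unfolding simple_subgroup_def by blast
  ultimately have "W N = G" by simp
  then have "\<gamma> \<in> W N" using \<gamma>_G by simp
  then have cN: "commutator \<delta> \<gamma> \<in> N" by (simp add: W_def cm_def)
  have "G \<union> {commutator \<delta> \<gamma>} \<subseteq> N" using GN cN by blast
  then have "HH \<subseteq> N" unfolding HH_def
    by (rule group.generate_subgroup_incl[OF group_homeo _ Nsub])
  then show ?thesis using NH by blast
qed

lemma HH_simple: "simple_subgroup HH"
  unfolding simple_subgroup_def using HH_ne HH_normal_trivial by blast

lemma HH_vig: "vigorous HH"
  unfolding vigorous_def
proof (intro allI impI)
  fix A B C assume "clopen A \<and> clopen B \<and> clopen C \<and> B \<noteq> {} \<and> C \<noteq> {} \<and> B \<subset> A \<and> C \<subset> A"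
  then obtain g where "g \<in> G" "supp g \<subseteq> A \<and> g ` B \<subseteq> C" using G_vig unfolding vigorous_def by blast
  then show "\<exists>g\<in>HH. supp g \<subseteq> A \<and> g ` B \<subseteq> C" using G_in_HH by blast
qed

lemma HH_fg: "fin_gen G \<Longrightarrow> fin_gen HH"
proof -
  assume "fin_gen G"
  then obtain S where S: "finite S" "S \<subseteq> G" "generate homeo_group S = G" by (auto simp: fin_gen_def)
  let ?S = "S \<union> {commutator \<delta> \<gamma>}"
  have fin: "finite ?S" using S(1) by simp
  have sub: "?S \<subseteq> HH" using S(2) G_in_HH c_in_HH by blast
  have SH: "?S \<subseteq> carrier homeo_group" using S(2) GH c_Homeo by auto
  have "generate homeo_group ?S \<subseteq> HH" unfolding HH_def
    by (rule group.mono_generate[OF group_homeo]) (use S(2) in blast)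
  moreover have "HH \<subseteq> generate homeo_group ?S"
  proof -
    have "G \<subseteq> generate homeo_group ?S"
      using group.mono_generate[OF group_homeo, of S ?S] S(3) by blast
    moreover have "commutator \<delta> \<gamma> \<in> generate homeo_group ?S" by (rule generate.incl) simp
    ultimately have "G \<union> {commutator \<delta> \<gamma>} \<subseteq> generate homeo_group ?S" by blast
    then show ?thesis unfolding HH_def
      by (rule group.generate_subgroup_incl[OF group_homeo _ group.generate_is_subgroup[OF group_homeo SH]])
  qed
  ultimately have "generate homeo_group ?S = HH" by blast
  then show ?thesis using fin sub unfolding fin_gen_def by blast
qed

end

theorem proposition2p19:
  fixes G :: "(point \<Rightarrow> point) set" and D :: "point set"
    and \<gamma> \<delta> :: "point \<Rightarrow> point"
  assumes G_sub: "subgroup G homeo_group"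
    and G_simple: "simple_subgroup G"
    and G_vig: "vigorous G"
    and D_K: "D \<in> K_C"
    and \<gamma>_G: "\<gamma> \<in> G"
    and disj: "\<gamma> ` D \<inter> D = {}"
    and nonfull: "\<gamma> ` D \<union> D \<noteq> topspace cantor"
    and \<delta>_homeo: "\<delta> \<in> Homeo"
    and \<delta>_fix: "\<forall>p \<in> topspace cantor - D. \<delta> p = p"
  defines "H \<equiv> generate homeo_group (G \<union> {commutator \<delta> \<gamma>})"
  shows "simple_subgroup H \<and> vigorous H \<and> (fin_gen G \<longrightarrow> fin_gen H)"
proof -
  interpret setting G D \<gamma> \<delta>
    by (rule setting.intro[OF G_sub G_simple G_vig D_K \<gamma>_G disj nonfull \<delta>_homeo \<delta>_fix])
  have "H = HH" unfolding H_def HH_def ..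
  then show ?thesis using HH_simple HH_vig HH_fg by simp
qed


end
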